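(* Let $X$ be a finite alphabet with at least two letters and $k\ge2$. For every $F\in\mathcal F_{\mathcal T_k}$, $$\mathcal R\mathbf\Sigma(F)=\{A\circ f_{\mathcal M}\mid \mathcal M\text{ an automaton over }X,\ A:C_{\mathcal M}\to\bar k,\ A\in\mathcal C_{\mathcal M}(F)\}.$$
   Context: Automaton $\mathcal M=(Q,f,in)$: $f_{\mathcal M}(\xi)$ is the set of states visited infinitely often on input $\xi$, $C_{\mathcal M}=\{f_{\mathcal M}(\xi):\xi\in X^\omega\}$. On $C_{\mathcal M}$: $c\le_0 d$ iff some (equivalently every) state of $d$ is reachable from some (equivalently every) state of $c$; $c\le_1 d$ iff $c\supseteq d$. $\mathcal C_{\mathcal M}=(\mathcal C_0,\mathcal C_1)$ where $\mathcal C_i$ is the family of $\le_i$-up subsets of $C_{\mathcal M}$. $\mathcal R$ is the class of regular $\omega$-languages; $\mathcal R\mathbf\Sigma=(\mathcal R\cap\mathbf\Sigma^0_1,\mathcal R\cap\mathbf\Sigma^0_2)$ with $\mathbf\Sigma^0_1$ the open and $\mathbf\Sigma^0_2$ the countable unions of closed subsets of $X^\omega$. Forests: finite $F\subseteq\omega^+$ closed under nonempty prefixes; trees: finite prefix-closed $V\subseteq\omega^*$; $\mathcal F_{\mathcal T_k}$: forests $(F,c)$ whose labels $c(\tau)=(V,v)$ are $\bar k$-labeled trees. For a 2-base $\mathcal L=(\mathcal L_0,\mathcal L_1)$ in $S$ (families closed under finite $\cup,\cap$ containing $\emptyset,S$), an $F$-family is $\{U_\tau\}_{\tau\in F}\subseteq\mathcal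 L_0$ with $U_{\tau i}\subseteq U_\tau$, $\bigcup U_\tau=S$, plus for each $\tau$ with $c(\tau)=(V,v)$ sets $U_{\tau\sigma}=\tilde U_\tau\cap B_{\tau\sigma}$ ($B_{\tau\sigma}\in\mathcal L_1$, $\sigma\in V$) with $U_{\tau\sigma i}\subseteq U_{\tau\sigma}$, $\bigcup_\sigma U_{\tau\sigma}=\tilde U_\tau$, where $\tilde U_\tau=U_\tau\setminus\bigcup_{\tau i\in F}U_{\tau i}$; it determines $A:S\to\bar k$ if $A(x)=v(\sigma)$ whenever $x\in U_{\tau\sigma}\setminus\bigcup_{\sigma i\in V}U_{\tau\sigma i}$. $\mathcal L(F)$ is the set of $k$-partitions of $S$ determined by some $F$-family over $\mathcal L$; this defines both $\mathcal R\mathbf\Sigma(F)$ and $\mathcal C_{\mathcal M}(F)$. *)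

theory Defs
  imports Main
begin

definition automaton :: "nat set \<Rightarrow> (nat \<Rightarrow> 'a \<Rightarrow> nat) \<Rightarrow> nat \<Rightarrow> bool" where
  "automaton Q f i \<longleftrightarrow> finite Q \<and> i \<in> Q \<and> (\<forall>q\<in>Q. \<forall>x. f q x \<in> Q)"

fun run :: "(nat \<Rightarrow> 'a \<Rightarrow> nat) \<Rightarrow> nat \<Rightarrow> (nat \<Rightarrow> 'a) \<Rightarrow> nat \<Rightarrow> nat" where
  "run f i \<xi> 0 = i"
| "run f i \<xi> (Suc n) = f (run f i \<xi> n) (\<xi> n)"

text \<open>f_M(xi): the set of states visited infinitely often.\<close>
definition inf_states :: "(nat \<Rightarrow> 'a \<Rightarrow> nat) \<Rightarrow> nat \<Rightarrow> (nat \<Rightarrow> 'a) \<Rightarrow> nat set" where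
  "inf_states f i \<xi> = {q. infinite {n. run f i \<xi> n = q}}"

definition CM :: "(nat \<Rightarrow> 'a \<Rightarrow> nat) \<Rightarrow> nat \<Rightarrow> nat set set" where
  "CM f i = range (inf_states f i)"

definition reach :: "(nat \<Rightarrow> 'a \<Rightarrow> nat) \<Rightarrow> nat \<Rightarrow> nat \<Rightarrow> bool" where
  "reach f p q \<longleftrightarrow> (p, q) \<in> {(r, f r x) | r x. True}\<^sup>*"

definition leq0 :: "(nat \<Rightarrow> 'a \<Rightarrow> nat) \<Rightarrow> nat set \<Rightarrow> nat set \<Rightarrow> bool" where
  "leq0 f c d \<longleftrightarrow> (\<exists>q\<in>c. \<exists>p\<in>d. reach f q p)"

definition leq1 :: "nat set \<Rightarrow> nat set \<Rightarrow> bool" where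
  "leq1 c d \<longleftrightarrow> d \<subseteq> c"

definition up_sets :: "'b set \<Rightarrow> ('b \<Rightarrow> 'b \<Rightarrow> bool) \<Rightarrow> 'b set set" where
  "up_sets C le = {U. U \<subseteq> C \<and> (\<forall>c\<in>U. \<forall>d\<in>C. le c d \<longrightarrow> d \<in> U)}"

definition CM0 :: "(nat \<Rightarrow> 'a \<Rightarrow> nat) \<Rightarrow> nat \<Rightarrow> nat set set set" where
  "CM0 f i = up_sets (CM f i) (leq0 f)"

definition CM1 :: "(nat \<Rightarrow> 'a \<Rightarrow> nat) \<Rightarrow> nat \<Rightarrow> nat set set set" where
  "CM1 f i = up_sets (CM f i) leq1"

text \<open>Regular omega-languages: those recognised by a deterministic Muller automaton
  (McNaughton's theorem).\<close>
definition regular_omega :: "(nat \<Rightarrow> 'a) set \<Rightarrow> bool" where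
  "regular_omega L \<longleftrightarrow> (\<exists>Q (f :: nat \<Rightarrow> 'a \<Rightarrow> nat) i \<F>. automaton Q f i \<and>
       L = {\<xi>. inf_states f i \<xi> \<in> \<F>})"

definition open_w :: "(nat \<Rightarrow> 'a) set \<Rightarrow> bool" where
  "open_w A \<longleftrightarrow> (\<forall>\<xi>\<in>A. \<exists>n. \<forall>\<eta>. (\<forall>j<n. \<eta> j = \<xi> j) \<longrightarrow> \<eta> \<in> A)"

definition closed_w :: "(nat \<Rightarrow> 'a) set \<Rightarrow> bool" where
  "closed_w A \<longleftrightarrow> open_w (- A)"

definition sigma02_w :: "(nat \<Rightarrow> 'a) set \<Rightarrow> bool" where
  "sigma02_w A \<longleftrightarrow> (\<exists>C :: nat \<Rightarrow> (nat \<Rightarrow> 'a) set. (\<forall>n. closed_w (C n)) \<and> A = (\<Union>n. C n))"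

definition RSig0 :: "(nat \<Rightarrow> 'a) set set" where
  "RSig0 = {A. regular_omega A \<and> open_w A}"

definition RSig1 :: "(nat \<Rightarrow> 'a) set set" where
  "RSig1 = {A. regular_omega A \<and> sigma02_w A}"

definition forest :: "nat list set \<Rightarrow> bool" where
  "forest F \<longleftrightarrow> finite F \<and> [] \<notin> F \<and> (\<forall>\<tau>\<in>F. \<forall>n. 1 \<le> n \<and> n \<le> length \<tau> \<longrightarrow> take n \<tau> \<in> F)"

definition tree :: "nat list set \<Rightarrow> bool" where
  "tree V \<longleftrightarrow> finite V \<and> (\<forall>\<sigma>\<in>V. \<forall>n \<le> length \<sigma>. take n \<sigma> \<in> V)"

type_synonym ltree = "nat list set \<times> (nat list \<Rightarrow> nat)"

text \<open>(F, c) in F_{T_k}: a forest labeled by k-labeled trees (V, v), v : V -> {0..<k}.\<close>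
definition forest_Tk :: "nat \<Rightarrow> nat list set \<Rightarrow> (nat list \<Rightarrow> ltree) \<Rightarrow> bool" where
  "forest_Tk k F c \<longleftrightarrow> forest F \<and>
     (\<forall>\<tau>\<in>F. tree (fst (c \<tau>)) \<and> (\<forall>\<sigma>\<in>fst (c \<tau>). snd (c \<tau>) \<sigma> < k))"

definition Ut :: "nat list set \<Rightarrow> (nat list \<Rightarrow> 'b set) \<Rightarrow> nat list \<Rightarrow> 'b set" where
  "Ut F U \<tau> = U \<tau> - (\<Union>i\<in>{i. \<tau> @ [i] \<in> F}. U (\<tau> @ [i]))"

definition Uts :: "nat list set \<Rightarrow> (nat list \<Rightarrow> 'b set) \<Rightarrow> (nat list \<Rightarrow> nat list \<Rightarrow> 'b set)
    \<Rightarrow> nat list \<Rightarrow> nat list \<Rightarrow> 'b set" where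
  "Uts F U B \<tau> \<sigma> = Ut F U \<tau> \<inter> B \<tau> \<sigma>"

definition F_family :: "'b set \<Rightarrow> 'b set set \<Rightarrow> 'b set set \<Rightarrow> nat list set \<Rightarrow> (nat list \<Rightarrow> ltree)
    \<Rightarrow> (nat list \<Rightarrow> 'b set) \<Rightarrow> (nat list \<Rightarrow> nat list \<Rightarrow> 'b set) \<Rightarrow> bool" where
  "F_family S L0 L1 F c U B \<longleftrightarrow>
     (\<forall>\<tau>\<in>F. U \<tau> \<in> L0) \<and>
     (\<forall>\<tau>\<in>F. \<forall>i. \<tau> @ [i] \<in> F \<longrightarrow> U (\<tau> @ [i]) \<subseteq> U \<tau>) \<and>
     (\<Union>\<tau>\<in>F. U \<tau>) = S \<and>
     (\<forall>\<tau>\<in>F. \<forall>\<sigma>\<in>fst (c \<tau>). B \<tau> \<sigma> \<in> L1) \<and>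
     (\<forall>\<tau>\<in>F. \<forall>\<sigma>\<in>fst (c \<tau>). \<forall>i. \<sigma> @ [i] \<in> fst (c \<tau>) \<longrightarrow>
         Uts F U B \<tau> (\<sigma> @ [i]) \<subseteq> Uts F U B \<tau> \<sigma>) \<and>
     (\<forall>\<tau>\<in>F. (\<Union>\<sigma>\<in>fst (c \<tau>). Uts F U B \<tau> \<sigma>) = Ut F U \<tau>)"

definition determines :: "nat list set \<Rightarrow> (nat list \<Rightarrow> ltree)
    \<Rightarrow> (nat list \<Rightarrow> 'b set) \<Rightarrow> (nat list \<Rightarrow> nat list \<Rightarrow> 'b set) \<Rightarrow> ('b \<Rightarrow> nat) \<Rightarrow> bool" where
  "determines F c U B A \<longleftrightarrow>
     (\<forall>\<tau>\<in>F. \<forall>\<sigma>\<in>fst (c \<tau>). \<forall>x.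
        x \<in> Uts F U B \<tau> \<sigma> - (\<Union>i\<in>{i. \<sigma> @ [i] \<in> fst (c \<tau>)}. Uts F U B \<tau> (\<sigma> @ [i]))
        \<longrightarrow> A x = snd (c \<tau>) \<sigma>)"

text \<open>L(F): k-partitions A : S -> {0..<k} determined by some F-family over L = (L0, L1).
  A k-partition is represented by a function into nat whose values on S are < k.\<close>
definition Lpart :: "'b set \<Rightarrow> 'b set set \<Rightarrow> 'b set set \<Rightarrow> nat \<Rightarrow> nat list set
    \<Rightarrow> (nat list \<Rightarrow> ltree) \<Rightarrow> ('b \<Rightarrow> nat) set" where
  "Lpart S L0 L1 k F c = {A. (\<forall>x\<in>S. A x < k) \<and>
      (\<exists>U B. F_family S L0 L1 F c U B \<and> determines F c U B A)}"

end

theory Submission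
  imports Defs "HOL-Library.Infinite_Set" "HOL-Library.Nat_Bijection"
begin

definition runl :: "(nat \<Rightarrow> 'a \<Rightarrow> nat) \<Rightarrow> nat \<Rightarrow> 'a list \<Rightarrow> nat" where
  "runl f q w = foldl f q w"

definition conc :: "'a list \<Rightarrow> (nat \<Rightarrow> 'a) \<Rightarrow> nat \<Rightarrow> 'a" where
  "conc w \<xi> = (\<lambda>n. if n < length w then w ! n else \<xi> (n - length w))"

definition sh :: "nat \<Rightarrow> (nat \<Rightarrow> 'a) \<Rightarrow> nat \<Rightarrow> 'a" where
  "sh m \<xi> = (\<lambda>j. \<xi> (m + j))"

lemma runl_snoc[simp]: "runl f q (w @ [x]) = f (runl f q w) x"
  by (simp add: runl_def)

lemma runl_Nil[simp]: "runl f q [] = q"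
  by (simp add: runl_def)

lemma runl_append: "runl f q (u @ w) = runl f (runl f q u) w"
  by (simp add: runl_def)

lemma run_shift: "run f q \<xi> (m + n) = run f (run f q \<xi> m) (sh m \<xi>) n"
  by (induction n) (auto simp: sh_def)

lemma run_prefix: "(\<forall>j<n. \<eta> j = \<xi> j) \<Longrightarrow> run f q \<eta> n = run f q \<xi> n"
  by (induction n) auto

lemma sh_conc[simp]: "sh (length w) (conc w \<xi>) = \<xi>"
  by (auto simp: sh_def conc_def)

lemma run_conc1: "n \<le> length w \<Longrightarrow> run f q (conc w \<xi>) n = runl f q (take n w)"
proof (induction n)
  case (Suc n)
  then have "take (Suc n) w = take n w @ [w ! n]" by (simp add: take_Suc_conv_app_nth)
  with Suc show ?case by (simp add: conc_def)
qed simp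

lemma run_conc_len: "run f q (conc w \<xi>) (length w) = runl f q w"
  by (simp add: run_conc1)

lemma run_conc2: "run f q (conc w \<xi>) (length w + m) = run f (runl f q w) \<xi> m"
  by (simp add: run_shift run_conc_len)

lemma runl_map: "runl f q (map \<xi> [0..<n]) = run f q \<xi> n"
  by (induction n) auto

lemma inf_states_iff: "q \<in> inf_states f i \<xi> \<longleftrightarrow> (\<forall>N. \<exists>n\<ge>N. run f i \<xi> n = q)"
  by (simp add: inf_states_def infinite_nat_iff_unbounded_le)

lemma inf_states_shift: "inf_states f i \<xi> = inf_states f (run f i \<xi> m) (sh m \<xi>)"
proof -
  have "(\<forall>N. \<exists>n\<ge>N. run f i \<xi> n = q) \<longleftrightarrow> (\<forall>N. \<exists>n\<ge>N. run f i \<xi> (m + n) = q)" for q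
  proof
    assume H: "\<forall>N. \<exists>n\<ge>N. run f i \<xi> n = q"
    show "\<forall>N. \<exists>n\<ge>N. run f i \<xi> (m + n) = q"
    proof
      fix N obtain n where "n \<ge> N + m" "run f i \<xi> n = q" using H by blast
      then show "\<exists>n\<ge>N. run f i \<xi> (m + n) = q" by (intro exI[of _ "n - m"]) auto
    qed
  next
    assume H: "\<forall>N. \<exists>n\<ge>N. run f i \<xi> (m + n) = q"
    show "\<forall>N. \<exists>n\<ge>N. run f i \<xi> n = q"
    proof
      fix N obtain n where "n \<ge> N" "run f i \<xi> (m + n) = q" using H by blast
      then show "\<exists>n\<ge>N. run f i \<xi> n = q" by (intro exI[of _ "m + n"]) auto
    qed
  qed
  then show ?thesis by (auto simp: inf_states_iff run_shift)
qed

lemma inf_states_conc: "inf_states f q (conc w \<xi>) = inf_states f (runl f q w) \<xi>"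
  using inf_states_shift[of f q "conc w \<xi>" "length w"] by (simp add: run_conc_len)

lemma run_in_Q: "automaton Q f i \<Longrightarrow> run f i \<xi> n \<in> Q"
  by (induction n) (auto simp: automaton_def)

lemma inf_states_sub: "automaton Q f i \<Longrightarrow> inf_states f i \<xi> \<subseteq> Q"
  using run_in_Q by (fastforce simp: inf_states_iff)

lemma inf_states_nonempty: assumes "automaton Q f i" shows "inf_states f i \<xi> \<noteq> {}"
proof
  assume E: "inf_states f i \<xi> = {}"
  have fin: "finite Q" using assms by (simp add: automaton_def)
  have "UNIV = (\<Union>q\<in>Q. {n. run f i \<xi> n = q})" using run_in_Q[OF assms] by auto
  moreover have "finite (\<Union>q\<in>Q. {n. run f i \<xi> n = q})"
    using fin E by (auto simp: inf_states_def)
  ultimately show False by simp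
qed

lemma ev_in_inf: assumes "automaton Q f i"
  shows "\<exists>N. \<forall>m\<ge>N. run f i \<xi> m \<in> inf_states f i \<xi>"
proof -
  have fin: "finite Q" using assms by (simp add: automaton_def)
  have "{n. run f i \<xi> n \<notin> inf_states f i \<xi>} \<subseteq> (\<Union>q\<in>Q - inf_states f i \<xi>. {n. run f i \<xi> n = q})"
    using run_in_Q[OF assms] by auto
  moreover have "finite (\<Union>q\<in>Q - inf_states f i \<xi>. {n. run f i \<xi> n = q})"
    using fin by (auto simp: inf_states_def)
  ultimately have "finite {n. run f i \<xi> n \<notin> inf_states f i \<xi>}" by (rule finite_subset)
  then obtain N where "\<forall>n\<in>{n. run f i \<xi> n \<notin> inf_states f i \<xi>}. n < N"
    by (meson finite_nat_bounded lessThan_iff subsetD)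
  then show ?thesis by (metis (mono_tags) le_less_trans less_irrefl mem_Collect_eq)
qed

lemma reach_run: "reach f (run f i \<xi> n) (run f i \<xi> (n + j))"
proof (induction j)
  case 0 then show ?case by (simp add: reach_def)
next
  case (Suc j)
  have "(run f i \<xi> (n + j), run f i \<xi> (n + Suc j)) \<in> {(r, f r x) | r x. True}" by auto
  with Suc show ?case unfolding reach_def by (meson rtrancl.rtrancl_into_rtrancl)
qed

lemma reach_word: "reach f q p \<Longrightarrow> \<exists>w. runl f q w = p"
  unfolding reach_def
proof (induction rule: rtrancl_induct)
  case base then show ?case by (intro exI[of _ "[]"]) simp
next
  case (step y z)
  then obtain w x where "runl f q w = y" "z = f y x" by blast
  then show ?case by (intro exI[of _ "w @ [x]"]) simp
qed


definition pf :: "(nat \<Rightarrow> 'a \<Rightarrow> nat) \<Rightarrow> (nat \<Rightarrow> 'a \<Rightarrow> nat) \<Rightarrow> nat \<Rightarrow> 'a \<Rightarrow> nat" where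
  "pf f1 f2 q x = prod_encode (f1 (fst (prod_decode q)) x, f2 (snd (prod_decode q)) x)"

lemma run_pf: "run (pf f1 f2) (prod_encode (i1, i2)) \<xi> n = prod_encode (run f1 i1 \<xi> n, run f2 i2 \<xi> n)"
  by (induction n) (auto simp: pf_def)

lemma automaton_pf: "automaton Q1 f1 i1 \<Longrightarrow> automaton Q2 f2 i2 \<Longrightarrow>
  automaton (prod_encode ` (Q1 \<times> Q2)) (pf f1 f2) (prod_encode (i1, i2))"
  by (auto simp: automaton_def pf_def)

lemma inf_pf1:
  assumes a1: "automaton Q1 f1 i1" and a2: "automaton Q2 f2 i2"
  shows "inf_states f1 i1 \<xi> = (fst \<circ> prod_decode) ` inf_states (pf f1 f2) (prod_encode (i1, i2)) \<xi>"
proof (intro set_eqI iffI)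
  fix q assume q: "q \<in> inf_states f1 i1 \<xi>"
  have "{n. run f1 i1 \<xi> n = q} \<subseteq> (\<Union>q2\<in>Q2. {n. run (pf f1 f2) (prod_encode (i1, i2)) \<xi> n = prod_encode (q, q2)})"
    using run_in_Q[OF a2] by (auto simp: run_pf)
  moreover have "finite Q2" using a2 by (simp add: automaton_def)
  have "\<exists>q2. infinite {n. run (pf f1 f2) (prod_encode (i1, i2)) \<xi> n = prod_encode (q, q2)}"
  proof (rule ccontr)
    assume "\<nexists>x. infinite {n. run (pf f1 f2) (prod_encode (i1, i2)) \<xi> n = prod_encode (q, x)}"
    then have "finite (\<Union>x\<in>Q2. {n. run (pf f1 f2) (prod_encode (i1, i2)) \<xi> n = prod_encode (q, x)})"
      using \<open>finite Q2\<close> by blast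
    then have "finite {n. run f1 i1 \<xi> n = q}" using \<open>{n. run f1 i1 \<xi> n = q} \<subseteq> _\<close> by (rule finite_subset[rotated])
    then show False using q by (simp add: inf_states_def)
  qed
  then obtain q2 where "infinite {n. run (pf f1 f2) (prod_encode (i1, i2)) \<xi> n = prod_encode (q, q2)}" by blast
  then have "prod_encode (q, q2) \<in> inf_states (pf f1 f2) (prod_encode (i1, i2)) \<xi>"
    by (simp add: inf_states_def)
  then show "q \<in> (fst \<circ> prod_decode) ` inf_states (pf f1 f2) (prod_encode (i1, i2)) \<xi>"
    by (auto simp: image_iff intro!: bexI[where x="prod_encode (q, q2)"])
next
  fix q assume "q \<in> (fst \<circ> prod_decode) ` inf_states (pf f1 f2) (prod_encode (i1, i2)) \<xi>"
  then obtain p where p: "p \<in> inf_states (pf f1 f2) (prod_encode (i1, i2)) \<xi>" "q = fst (prod_decode p)" by auto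
  obtain a b where ab: "prod_decode p = (a, b)" by fastforce
  then have "p = prod_encode (a, b)" using prod_decode_inverse[of p] by simp
  then have "{n. run (pf f1 f2) (prod_encode (i1, i2)) \<xi> n = p} \<subseteq> {n. run f1 i1 \<xi> n = q}"
    using p ab by (auto simp: run_pf)
  then show "q \<in> inf_states f1 i1 \<xi>" using p(1) unfolding inf_states_def
    using finite_subset by blast
qed

lemma inf_pf2:
  assumes a1: "automaton Q1 f1 i1" and a2: "automaton Q2 f2 i2"
  shows "inf_states f2 i2 \<xi> = (snd \<circ> prod_decode) ` inf_states (pf f1 f2) (prod_encode (i1, i2)) \<xi>"
proof (intro set_eqI iffI)
  fix q assume q: "q \<in> inf_states f2 i2 \<xi>"
  have "{n. run f2 i2 \<xi> n = q} \<subseteq> (\<Union>q1\<in>Q1. {n. run (pf f1 f2) (prod_encode (i1, i2)) \<xi> n = prod_encode (q1, q)})"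
    using run_in_Q[OF a1] by (auto simp: run_pf)
  moreover have "finite Q1" using a1 by (simp add: automaton_def)
  have "\<exists>q1. infinite {n. run (pf f1 f2) (prod_encode (i1, i2)) \<xi> n = prod_encode (q1, q)}"
  proof (rule ccontr)
    assume "\<nexists>x. infinite {n. run (pf f1 f2) (prod_encode (i1, i2)) \<xi> n = prod_encode (x, q)}"
    then have "finite (\<Union>x\<in>Q1. {n. run (pf f1 f2) (prod_encode (i1, i2)) \<xi> n = prod_encode (x, q)})"
      using \<open>finite Q1\<close> by blast
    then have "finite {n. run f2 i2 \<xi> n = q}" using \<open>{n. run f2 i2 \<xi> n = q} \<subseteq> _\<close> by (rule finite_subset[rotated])
    then show False using q by (simp add: inf_states_def)
  qed
  then obtain q1 where "infinite {n. run (pf f1 f2) (prod_encode (i1, i2)) \<xi> n = prod_encode (q1, q)}" by blast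
  then have "prod_encode (q1, q) \<in> inf_states (pf f1 f2) (prod_encode (i1, i2)) \<xi>"
    by (simp add: inf_states_def)
  then show "q \<in> (snd \<circ> prod_decode) ` inf_states (pf f1 f2) (prod_encode (i1, i2)) \<xi>"
    by (auto simp: image_iff intro!: bexI[where x="prod_encode (q1, q)"])
next
  fix q assume "q \<in> (snd \<circ> prod_decode) ` inf_states (pf f1 f2) (prod_encode (i1, i2)) \<xi>"
  then obtain p where p: "p \<in> inf_states (pf f1 f2) (prod_encode (i1, i2)) \<xi>" "q = snd (prod_decode p)" by auto
  obtain a b where ab: "prod_decode p = (a, b)" by fastforce
  then have "p = prod_encode (a, b)" using prod_decode_inverse[of p] by simp
  then have "{n. run (pf f1 f2) (prod_encode (i1, i2)) \<xi> n = p} \<subseteq> {n. run f2 i2 \<xi> n = q}"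
    using p ab by (auto simp: run_pf)
  then show "q \<in> inf_states f2 i2 \<xi>" using p(1) unfolding inf_states_def
    using finite_subset by blast
qed

definition saturates :: "(nat \<Rightarrow> 'a \<Rightarrow> nat) \<Rightarrow> nat \<Rightarrow> (nat \<Rightarrow> 'a) set \<Rightarrow> bool" where
  "saturates f i L \<longleftrightarrow> (\<forall>\<xi> \<eta>. inf_states f i \<xi> = inf_states f i \<eta> \<longrightarrow> (\<xi> \<in> L \<longleftrightarrow> \<eta> \<in> L))"

lemma exists_sat:
  fixes LL :: "(nat \<Rightarrow> 'a) set set"
  assumes "finite LL" "\<forall>L\<in>LL. regular_omega L"
  shows "\<exists>Q (f :: nat \<Rightarrow> 'a \<Rightarrow> nat) i. automaton Q f i \<and> (\<forall>L\<in>LL. saturates f i L)"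
  using assms
proof (induction LL rule: finite_induct)
  case empty
  have "automaton {0} (\<lambda>_ _. 0) 0" by (simp add: automaton_def)
  then show ?case by blast
next
  case (insert L LL)
  then obtain Q1 and f1 :: "nat \<Rightarrow> 'a \<Rightarrow> nat" and i1 where a1: "automaton Q1 f1 i1"
    and s1: "\<forall>L\<in>LL. saturates f1 i1 L" by auto
  from insert.prems obtain Q2 and f2 :: "nat \<Rightarrow> 'a \<Rightarrow> nat" and i2 and FF where a2: "automaton Q2 f2 i2"
    and L: "L = {\<xi>. inf_states f2 i2 \<xi> \<in> FF}" unfolding regular_omega_def by auto
  let ?f = "pf f1 f2" and ?i = "prod_encode (i1, i2)"
  have "\<forall>L'\<in>insert L LL. saturates ?f ?i L'"
  proof
    fix L' assume "L' \<in> insert L LL"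
    then show "saturates ?f ?i L'"
    proof
      assume "L' = L"
      have "inf_states f2 i2 \<xi> = inf_states f2 i2 \<eta>" if "inf_states ?f ?i \<xi> = inf_states ?f ?i \<eta>" for \<xi> \<eta>
        using inf_pf2[OF a1 a2, of \<xi>] inf_pf2[OF a1 a2, of \<eta>] that by simp
      then show ?thesis unfolding \<open>L' = L\<close> saturates_def L mem_Collect_eq by metis
    next
      assume "L' \<in> LL" then have "saturates f1 i1 L'" using s1 by blast
      moreover have "inf_states f1 i1 \<xi> = inf_states f1 i1 \<eta>" if "inf_states ?f ?i \<xi> = inf_states ?f ?i \<eta>" for \<xi> \<eta>
        using inf_pf1[OF a1 a2, of \<xi>] inf_pf1[OF a1 a2, of \<eta>] that by simp
      ultimately show ?thesis unfolding saturates_def by blast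
    qed
  qed
  then show ?case using automaton_pf[OF a1 a2] by blast
qed


lemma open_sat:
  assumes a: "automaton Q f i" and s: "saturates f i L" and o: "open_w L"
  shows "inf_states f i ` L \<in> CM0 f i"
  unfolding CM0_def up_sets_def
proof (intro CollectI conjI ballI impI)
  show "inf_states f i ` L \<subseteq> CM f i" by (auto simp: CM_def)
next
  fix c d assume c: "c \<in> inf_states f i ` L" and d: "d \<in> CM f i" and le: "leq0 f c d"
  obtain \<xi> where \<xi>: "\<xi> \<in> L" "c = inf_states f i \<xi>" using c by auto
  obtain \<eta> where \<eta>: "d = inf_states f i \<eta>" using d by (auto simp: CM_def)
  obtain q p where qp: "q \<in> c" "p \<in> d" "reach f q p" using le by (auto simp: leq0_def)
  obtain n where n: "\<forall>\<zeta>. (\<forall>j<n. \<zeta> j = \<xi> j) \<longrightarrow> \<zeta> \<in> L" using o \<xi>(1) by (auto simp: open_w_def)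
  obtain N where N: "N \<ge> n" "run f i \<xi> N = q" using qp(1) \<xi>(2) by (auto simp: inf_states_iff)
  obtain m where m: "run f i \<eta> m = p" using qp(2) \<eta> by (auto simp: inf_states_iff)
  obtain w where w: "runl f q w = p" using reach_word[OF qp(3)] by blast
  define \<zeta> where "\<zeta> = conc (map \<xi> [0..<N]) (conc w (sh m \<eta>))"
  have "\<forall>j<n. \<zeta> j = \<xi> j" using N(1) by (auto simp: \<zeta>_def conc_def)
  then have "\<zeta> \<in> L" using n by blast
  moreover have "inf_states f i \<zeta> = d"
    unfolding \<zeta>_def inf_states_conc runl_map N(2) w
    using inf_states_shift[of f i \<eta> m] m \<eta> by simp
  ultimately show "d \<in> inf_states f i ` L" by blast
qed

lemma regular_pre: "automaton Q f i \<Longrightarrow> regular_omega {\<xi>. inf_states f i \<xi> \<in> W}"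
  unfolding regular_omega_def by blast

lemma pre_open:
  assumes a: "automaton Q f i" and W: "W \<in> CM0 f i"
  shows "{\<xi>. inf_states f i \<xi> \<in> W} \<in> RSig0"
  unfolding RSig0_def
proof (intro CollectI conjI)
  show "regular_omega {\<xi>. inf_states f i \<xi> \<in> W}" by (rule regular_pre[OF a])
  show "open_w {\<xi>. inf_states f i \<xi> \<in> W}"
    unfolding open_w_def
  proof
    fix \<xi> assume "\<xi> \<in> {\<xi>. inf_states f i \<xi> \<in> W}"
    then have xW: "inf_states f i \<xi> \<in> W" by simp
    obtain N where N: "\<forall>m\<ge>N. run f i \<xi> m \<in> inf_states f i \<xi>" using ev_in_inf[OF a] by blast
    show "\<exists>n. \<forall>\<eta>. (\<forall>j<n. \<eta> j = \<xi> j) \<longrightarrow> \<eta> \<in> {\<xi>. inf_states f i \<xi> \<in> W}"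
    proof (intro exI allI impI)
      fix \<eta> assume ag: "\<forall>j<N. \<eta> j = \<xi> j"
      have q: "run f i \<eta> N = run f i \<xi> N" using run_prefix[OF ag] .
      obtain p where p: "p \<in> inf_states f i \<eta>" using inf_states_nonempty[OF a] by blast
      then obtain m where m: "m \<ge> N" "run f i \<eta> m = p" by (auto simp: inf_states_iff)
      have "reach f (run f i \<eta> N) (run f i \<eta> (N + (m - N)))" by (rule reach_run)
      then have "reach f (run f i \<xi> N) p" using q m by simp
      then have "leq0 f (inf_states f i \<xi>) (inf_states f i \<eta>)"
        unfolding leq0_def using N p by blast
      moreover have "inf_states f i \<eta> \<in> CM f i" by (simp add: CM_def)
      ultimately show "\<eta> \<in> {\<xi>. inf_states f i \<xi> \<in> W}"
        using W xW unfolding CM0_def up_sets_def by blast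
    qed
  qed
qed

lemma closed_tail: "closed_w {\<xi>. \<forall>m\<ge>n. run f i \<xi> m \<in> c}"
  unfolding closed_w_def open_w_def
proof
  fix \<xi> assume "\<xi> \<in> - {\<xi>. \<forall>m\<ge>n. run f i \<xi> m \<in> c}"
  then obtain m where m: "m \<ge> n" "run f i \<xi> m \<notin> c" by auto
  show "\<exists>n'. \<forall>\<eta>. (\<forall>j<n'. \<eta> j = \<xi> j) \<longrightarrow> \<eta> \<in> - {\<xi>. \<forall>m\<ge>n. run f i \<xi> m \<in> c}"
  proof (intro exI allI impI)
    fix \<eta> assume "\<forall>j<m. \<eta> j = \<xi> j"
    then have "run f i \<eta> m = run f i \<xi> m" by (rule run_prefix)
    then show "\<eta> \<in> - {\<xi>. \<forall>m\<ge>n. run f i \<xi> m \<in> c}" using m by auto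
  qed
qed

lemma closed_empty: "closed_w {}"
  by (simp add: closed_w_def open_w_def)

lemma CM_sub: "automaton Q f i \<Longrightarrow> CM f i \<subseteq> Pow Q"
  using inf_states_sub by (fastforce simp: CM_def)

lemma pre_sigma:
  assumes a: "automaton Q f i" and W: "W \<in> CM1 f i"
  shows "{\<xi>. inf_states f i \<xi> \<in> W} \<in> RSig1"
  unfolding RSig1_def
proof (intro CollectI conjI)
  show "regular_omega {\<xi>. inf_states f i \<xi> \<in> W}" by (rule regular_pre[OF a])
  have WC: "W \<subseteq> CM f i" using W by (simp add: CM1_def up_sets_def)
  have "finite Q" using a by (simp add: automaton_def)
  then have "finite W" using WC CM_sub[OF a] by (meson finite_Pow_iff finite_subset)
  then obtain cs where cs: "set cs = W" using finite_list by blast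
  define C where "C j = (if snd (prod_decode j) < length cs
      then {\<xi>. \<forall>m\<ge>fst (prod_decode j). run f i \<xi> m \<in> cs ! snd (prod_decode j)} else {})" for j
  have "\<forall>j. closed_w (C j)" unfolding C_def by (simp add: closed_tail closed_empty)
  moreover have "{\<xi>. inf_states f i \<xi> \<in> W} = (\<Union>j. C j)"
  proof (intro set_eqI iffI)
    fix \<xi> assume "\<xi> \<in> {\<xi>. inf_states f i \<xi> \<in> W}"
    then obtain t where t: "t < length cs" "cs ! t = inf_states f i \<xi>" using cs
      by (auto simp: in_set_conv_nth)
    obtain N where N: "\<forall>m\<ge>N. run f i \<xi> m \<in> inf_states f i \<xi>" using ev_in_inf[OF a] by blast
    have "\<xi> \<in> C (prod_encode (N, t))" using t N by (simp add: C_def)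
    then show "\<xi> \<in> (\<Union>j. C j)" by blast
  next
    fix \<xi> assume "\<xi> \<in> (\<Union>j. C j)"
    then obtain j where j: "\<xi> \<in> C j" by blast
    then have t: "snd (prod_decode j) < length cs" by (simp add: C_def split: if_splits)
    let ?c = "cs ! snd (prod_decode j)"
    have cW: "?c \<in> W" using t cs by auto
    have tail: "\<forall>m\<ge>fst (prod_decode j). run f i \<xi> m \<in> ?c" using j t by (simp add: C_def)
    have "inf_states f i \<xi> \<subseteq> ?c"
    proof
      fix q assume "q \<in> inf_states f i \<xi>"
      then obtain m where "m \<ge> fst (prod_decode j)" "run f i \<xi> m = q" by (auto simp: inf_states_iff)
      then show "q \<in> ?c" using tail by auto
    qed
    then have "leq1 ?c (inf_states f i \<xi>)" by (simp add: leq1_def)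
    moreover have "inf_states f i \<xi> \<in> CM f i" by (simp add: CM_def)
    ultimately show "\<xi> \<in> {\<xi>. inf_states f i \<xi> \<in> W}"
      using W cW unfolding CM1_def up_sets_def by blast
  qed
  ultimately show "sigma02_w {\<xi>. inf_states f i \<xi> \<in> W}" unfolding sigma02_w_def by blast
qed


lemma take_map_upt: "j \<le> t \<Longrightarrow> take j (map g [0..<t]) = map g [0..<j]"
  by (simp add: take_map)

lemma limit_word:
  fixes \<beta> :: "nat \<Rightarrow> 'a" and \<gamma> w0 :: "'a list" and Op :: "nat \<Rightarrow> (nat \<Rightarrow> 'a) set"
  assumes w0: "runl f i w0 = p"
  and \<beta>c: "\<forall>j. run f p \<beta> j \<in> c"
  and \<beta>ret: "\<forall>K. \<exists>t\<ge>K. run f p \<beta> t = p"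
  and \<gamma>ne: "\<gamma> \<noteq> []" and \<gamma>p: "runl f p \<gamma> = p"
  and \<gamma>c: "\<forall>j\<le>length \<gamma>. runl f p (take j \<gamma>) \<in> c"
  and \<gamma>cov: "\<forall>q\<in>c. \<exists>j\<le>length \<gamma>. runl f p (take j \<gamma>) = q"
  and Oopen: "\<forall>n. open_w (Op n)"
  and Oin: "\<forall>n w. runl f i w = p \<longrightarrow> conc w \<beta> \<in> Op n"
  shows "\<exists>\<zeta>. inf_states f i \<zeta> = c \<and> (\<forall>n. \<zeta> \<in> Op n)"
proof -
  define Kf where "Kf n \<zeta> = (SOME K. \<forall>\<eta>. (\<forall>j<K. \<eta> j = \<zeta> j) \<longrightarrow> \<eta> \<in> Op n)" for n \<zeta>
  have Kf: "\<forall>\<eta>. (\<forall>j<Kf n \<zeta>. \<eta> j = \<zeta> j) \<longrightarrow> \<eta> \<in> Op n" if "\<zeta> \<in> Op n" for n \<zeta>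
  proof -
    have "\<exists>K. \<forall>\<eta>. (\<forall>j<K. \<eta> j = \<zeta> j) \<longrightarrow> \<eta> \<in> Op n" using Oopen that by (auto simp: open_w_def)
    then show ?thesis unfolding Kf_def by (rule someI_ex)
  qed
  define nxt where "nxt K = (SOME t. t \<ge> K \<and> run f p \<beta> t = p)" for K
  have nxt: "nxt K \<ge> K \<and> run f p \<beta> (nxt K) = p" for K
  proof -
    have "\<exists>t. t \<ge> K \<and> run f p \<beta> t = p" using \<beta>ret by blast
    then show ?thesis unfolding nxt_def by (rule someI_ex)
  qed
  define W where "W = rec_nat w0 (\<lambda>n wn. wn @ map \<beta> [0..<nxt (Kf n (conc wn \<beta>))] @ \<gamma>)"
  define T where "T n = nxt (Kf n (conc (W n) \<beta>))" for n
  define seg where "seg n = map \<beta> [0..<T n] @ \<gamma>" for n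
  have Tp: "run f p \<beta> (T n) = p" for n using nxt by (simp add: T_def)
  have W0: "W 0 = w0" by (simp add: W_def)
  have WS: "W (Suc n) = W n @ seg n" for n by (simp add: W_def seg_def T_def)
  have segp: "runl f p (seg n) = p" for n
    using nxt \<gamma>p by (simp add: seg_def runl_append runl_map T_def)
  have Wp: "runl f i (W n) = p" for n
    by (induction n) (simp_all add: W0 w0 WS runl_append segp)
  have lenS: "length (W (Suc n)) > length (W n)" for n using \<gamma>ne by (simp add: WS seg_def)
  have lenn: "length (W n) \<ge> n" for n
  proof (induction n)
    case (Suc n) then show ?case using lenS[of n] by simp
  qed simp
  have pref: "\<exists>u. W m = W n @ u" if "n \<le> m" for n m
    using that
  proof (induction m rule: dec_induct)
    case base then show ?case by simp
  next
    case (step m) then show ?case by (auto simp: WS)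
  qed
  define \<zeta> where "\<zeta> j = W (Suc j) ! j" for j
  have \<zeta>W: "\<zeta> j = W n ! j" if "j < length (W n)" for j n
  proof -
    obtain u where u: "W (max n (Suc j)) = W n @ u" using pref[of n "max n (Suc j)"] by auto
    obtain u' where u': "W (max n (Suc j)) = W (Suc j) @ u'" using pref[of "Suc j" "max n (Suc j)"] by auto
    have "j < length (W (Suc j))" using lenn[of "Suc j"] by simp
    then have "W (max n (Suc j)) ! j = W (Suc j) ! j" using u' by (simp add: nth_append)
    moreover have "W (max n (Suc j)) ! j = W n ! j" using u that by (simp add: nth_append)
    ultimately show ?thesis by (simp add: \<zeta>_def)
  qed
  have run\<zeta>W: "run f i \<zeta> j = runl f i (take j (W n))" if "j \<le> length (W n)" for j n
  proof -
    have "\<forall>j'<j. \<zeta> j' = conc (W n) \<zeta> j'"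
    proof (intro allI impI)
      fix j' assume "j' < j"
      then have "j' < length (W n)" using that by simp
      then show "\<zeta> j' = conc (W n) \<zeta> j'" using \<zeta>W[of j' n] by (simp add: conc_def)
    qed
    then have "run f i \<zeta> j = run f i (conc (W n) \<zeta>) j" by (rule run_prefix)
    also have "\<dots> = runl f i (take j (W n))" using that by (rule run_conc1)
    finally show ?thesis .
  qed
  have runseg: "run f i \<zeta> (length (W n) + j) = runl f p (take j (seg n))" if "j \<le> length (seg n)" for n j
  proof -
    have "run f i \<zeta> (length (W n) + j) = runl f i (take (length (W n) + j) (W (Suc n)))"
      using that by (intro run\<zeta>W) (simp add: WS)
    also have "\<dots> = runl f i (W n @ take j (seg n))" by (simp add: WS)
    also have "\<dots> = runl f p (take j (seg n))" by (simp add: runl_append Wp)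
    finally show ?thesis .
  qed
  have segc: "runl f p (take j (seg n)) \<in> c" if "j \<le> length (seg n)" for n j
  proof (cases "j \<le> T n")
    case True
    then have "take j (seg n) = map \<beta> [0..<j]" by (simp add: seg_def take_map_upt)
    then show ?thesis using \<beta>c by (simp add: runl_map)
  next
    case False
    then have "take j (seg n) = map \<beta> [0..<T n] @ take (j - T n) \<gamma>" by (simp add: seg_def)
    moreover have "j - T n \<le> length \<gamma>" using that by (simp add: seg_def)
    ultimately show ?thesis using \<gamma>c by (simp add: runl_append runl_map Tp)
  qed
  have segcov: "\<exists>j\<le>length (seg n). runl f p (take j (seg n)) = q" if "q \<in> c" for n q
  proof -
    from \<gamma>cov that obtain j where j: "j \<le> length \<gamma>" "runl f p (take j \<gamma>) = q" by auto
    have len: "length (map \<beta> [0..<T n]) = T n" by simp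
    have tk: "take (T n + j) (seg n) = map \<beta> [0..<T n] @ take j \<gamma>"
      unfolding seg_def using take_append[of "T n + j" "map \<beta> [0..<T n]" \<gamma>] len by simp
    have "runl f p (take (T n + j) (seg n)) = runl f (runl f p (map \<beta> [0..<T n])) (take j \<gamma>)"
      unfolding tk by (rule runl_append)
    also have "\<dots> = q" using j(2) by (simp add: runl_map Tp)
    finally have "runl f p (take (T n + j) (seg n)) = q" .
    moreover have "T n + j \<le> length (seg n)" using j(1) by (simp add: seg_def)
    ultimately show ?thesis by blast
  qed
  have allc: "\<forall>j. length (W 0) \<le> j \<longrightarrow> j < length (W n) \<longrightarrow> run f i \<zeta> j \<in> c" for n
  proof (induction n)
    case 0 then show ?case by simp
  next
    case (Suc n)
    show ?case
    proof (intro allI impI)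
      fix j assume j: "length (W 0) \<le> j" "j < length (W (Suc n))"
      show "run f i \<zeta> j \<in> c"
      proof (cases "j < length (W n)")
        case True then show ?thesis using Suc j by blast
      next
        case False
        then obtain j' where j': "j = length (W n) + j'" by (intro that[of "j - length (W n)"]) simp
        then have "j' \<le> length (seg n)" using j(2) by (simp add: WS)
        then show ?thesis using j' runseg segc by simp
      qed
    qed
  qed
  have "inf_states f i \<zeta> = c"
  proof (intro set_eqI iffI)
    fix q assume "q \<in> inf_states f i \<zeta>"
    then obtain j where j: "j \<ge> length (W 0)" "run f i \<zeta> j = q" by (auto simp: inf_states_iff)
    have "j < length (W (Suc j))" using lenn[of "Suc j"] by simp
    then show "q \<in> c" using allc j by blast
  next
    fix q assume q: "q \<in> c"
    show "q \<in> inf_states f i \<zeta>" unfolding inf_states_iff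
    proof
      fix N
      obtain j where j: "j \<le> length (seg N)" "runl f p (take j (seg N)) = q" using segcov q by blast
      have "run f i \<zeta> (length (W N) + j) = q" using runseg j by simp
      moreover have "length (W N) + j \<ge> N" using lenn[of N] by simp
      ultimately show "\<exists>n\<ge>N. run f i \<zeta> n = q" by blast
    qed
  qed
  moreover have "\<zeta> \<in> Op n" for n
  proof -
    let ?w = "W n"
    have inO: "conc ?w \<beta> \<in> Op n" using Oin Wp by blast
    have "\<forall>j<Kf n (conc ?w \<beta>). \<zeta> j = conc ?w \<beta> j"
    proof (intro allI impI)
      fix j assume j: "j < Kf n (conc ?w \<beta>)"
      then have jT: "j < T n" using nxt[of "Kf n (conc ?w \<beta>)"] by (simp add: T_def)
      show "\<zeta> j = conc ?w \<beta> j"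
      proof (cases "j < length ?w")
        case True then show ?thesis using \<zeta>W by (simp add: conc_def)
      next
        case False
        have jl: "j < length (W (Suc n))" using jT by (simp add: WS seg_def)
        have "\<zeta> j = W (Suc n) ! j" using \<zeta>W[OF jl] .
        also have "\<dots> = seg n ! (j - length ?w)" using False by (simp add: WS nth_append)
        also have "\<dots> = \<beta> (j - length ?w)" using False jT by (simp add: seg_def nth_append less_imp_diff_less)
        finally show ?thesis using False by (simp add: conc_def)
      qed
    qed
    then show ?thesis using Kf[OF inO] by blast
  qed
  ultimately show ?thesis by blast
qed


lemma sigma_sat:
  assumes a: "automaton Q f i" and s: "saturates f i L" and sg: "sigma02_w L"
  shows "inf_states f i ` L \<in> CM1 f i"
  unfolding CM1_def up_sets_def
proof (intro CollectI conjI ballI impI)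
  show "inf_states f i ` L \<subseteq> CM f i" by (auto simp: CM_def)
next
  fix c d assume c: "c \<in> inf_states f i ` L" and d: "d \<in> CM f i" and le: "leq1 c d"
  have dc: "d \<subseteq> c" using le by (simp add: leq1_def)
  show "d \<in> inf_states f i ` L"
  proof (rule ccontr)
    assume nd: "d \<notin> inf_states f i ` L"
    obtain \<xi> where \<xi>: "\<xi> \<in> L" "c = inf_states f i \<xi>" using c by auto
    obtain \<eta> where \<eta>: "d = inf_states f i \<eta>" using d by (auto simp: CM_def)
    obtain Cs :: "nat \<Rightarrow> (nat \<Rightarrow> 'a) set" where Cs: "\<forall>n. closed_w (Cs n)" "L = (\<Union>n. Cs n)"
      using sg unfolding sigma02_w_def by blast
    obtain p where p: "p \<in> d" using inf_states_nonempty[OF a] \<eta> by blast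
    obtain N\<eta> where N\<eta>: "\<forall>m\<ge>N\<eta>. run f i \<eta> m \<in> d" using ev_in_inf[OF a] \<eta> by blast
    obtain m where m: "m \<ge> N\<eta>" "run f i \<eta> m = p" using p \<eta> by (auto simp: inf_states_iff)
    define \<beta> where "\<beta> = sh m \<eta>"
    have \<beta>run: "run f p \<beta> j = run f i \<eta> (m + j)" for j using run_shift[of f i \<eta> m j] m by (simp add: \<beta>_def)
    have \<beta>c: "\<forall>j. run f p \<beta> j \<in> c" using \<beta>run N\<eta> m dc by auto
    have \<beta>inf: "inf_states f p \<beta> = d" using inf_states_shift[of f i \<eta> m] m \<eta> by (simp add: \<beta>_def)
    have "p \<in> inf_states f p \<beta>" using p \<beta>inf by simp
    then have \<beta>ret: "\<forall>K. \<exists>t\<ge>K. run f p \<beta> t = p" unfolding inf_states_iff .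
    obtain N\<xi> where N\<xi>: "\<forall>m\<ge>N\<xi>. run f i \<xi> m \<in> c" using ev_in_inf[OF a] \<xi> by blast
    have pc: "p \<in> c" using p dc by blast
    obtain m1 where m1: "m1 \<ge> N\<xi>" "run f i \<xi> m1 = p" using pc \<xi> by (auto simp: inf_states_iff)
    have ex: "\<forall>q\<in>c. \<exists>t. t \<ge> m1 \<and> run f i \<xi> t = q" using \<xi> by (auto simp: inf_states_iff)
    obtain tf where tf: "\<forall>q\<in>c. tf q \<ge> m1 \<and> run f i \<xi> (tf q) = q" using bchoice[OF ex] by blast
    have finc: "finite c"
    proof -
      have "c \<subseteq> Q" using inf_states_sub[OF a] \<xi>(2) by simp
      moreover have "finite Q" using a by (simp add: automaton_def)
      ultimately show ?thesis by (rule finite_subset)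
    qed
    define T where "T = Max (tf ` c)"
    have tfT: "tf q \<le> T" if "q \<in> c" for q using finc that by (simp add: T_def)
    obtain m2 where m2: "m2 \<ge> Suc (max T m1)" "run f i \<xi> m2 = p" using pc \<xi> by (auto simp: inf_states_iff)
    define \<gamma> where "\<gamma> = map (sh m1 \<xi>) [0..<m2 - m1]"
    have \<gamma>run: "runl f p (take j \<gamma>) = run f i \<xi> (m1 + j)" if "j \<le> length \<gamma>" for j
    proof -
      have "take j \<gamma> = map (sh m1 \<xi>) [0..<j]" using that by (simp add: \<gamma>_def take_map_upt)
      then show ?thesis using run_shift[of f i \<xi> m1 j] m1 by (simp add: runl_map)
    qed
    have \<gamma>ne: "\<gamma> \<noteq> []" using m2 by (simp add: \<gamma>_def)
    have \<gamma>p: "runl f p \<gamma> = p" using \<gamma>run[of "length \<gamma>"] m2 by (simp add: \<gamma>_def)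
    have \<gamma>c: "\<forall>j\<le>length \<gamma>. runl f p (take j \<gamma>) \<in> c" using \<gamma>run N\<xi> m1 by simp
    have \<gamma>cov: "\<forall>q\<in>c. \<exists>j\<le>length \<gamma>. runl f p (take j \<gamma>) = q"
    proof
      fix q assume q: "q \<in> c"
      have j: "tf q - m1 \<le> length \<gamma>" using tfT[OF q] m2 by (simp add: \<gamma>_def)
      have "runl f p (take (tf q - m1) \<gamma>) = q" using \<gamma>run[OF j] tf q by simp
      then show "\<exists>j\<le>length \<gamma>. runl f p (take j \<gamma>) = q" using j by blast
    qed
    have w0: "runl f i (map \<xi> [0..<m1]) = p" using m1 by (simp add: runl_map)
    have Oopen: "\<forall>n. open_w (- Cs n)" using Cs by (simp add: closed_w_def)
    have Oin: "\<forall>n w. runl f i w = p \<longrightarrow> conc w \<beta> \<in> - Cs n"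
    proof (intro allI impI)
      fix n w assume w: "runl f i w = p"
      have "inf_states f i (conc w \<beta>) = d" using w \<beta>inf by (simp add: inf_states_conc)
      then show "conc w \<beta> \<in> - Cs n" using nd Cs(2) by blast
    qed
    obtain \<zeta> where \<zeta>: "inf_states f i \<zeta> = c" "\<forall>n. \<zeta> \<in> - Cs n"
      using limit_word[OF w0 \<beta>c \<beta>ret \<gamma>ne \<gamma>p \<gamma>c \<gamma>cov Oopen Oin] by blast
    have "\<zeta> \<notin> L" using \<zeta>(2) Cs(2) by blast
    moreover have "\<zeta> \<in> L"
    proof -
      have e: "inf_states f i \<xi> = inf_states f i \<zeta>" using \<zeta>(1) \<xi>(2) by simp
      then show ?thesis using s \<xi>(1) unfolding saturates_def by blast
    qed
    ultimately show False by blast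
  qed
qed


lemma Ut_pre: "Ut F (\<lambda>\<tau>. g -` U' \<tau>) \<tau> = g -` Ut F U' \<tau>"
  by (auto simp: Ut_def)

lemma Uts_pre: "Uts F (\<lambda>\<tau>. g -` U' \<tau>) (\<lambda>\<tau> \<sigma>. g -` B' \<tau> \<sigma>) \<tau> \<sigma> = g -` Uts F U' B' \<tau> \<sigma>"
  by (auto simp: Uts_def Ut_def)

lemma Ut_cong: "\<forall>\<tau>\<in>F. U1 \<tau> = U2 \<tau> \<Longrightarrow> \<tau> \<in> F \<Longrightarrow> Ut F U1 \<tau> = Ut F U2 \<tau>"
  by (auto simp: Ut_def)

lemma Uts_cong: "\<forall>\<tau>\<in>F. U1 \<tau> = U2 \<tau> \<Longrightarrow> \<tau> \<in> F \<Longrightarrow> B1 \<tau> \<sigma> = B2 \<tau> \<sigma> \<Longrightarrow>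
   Uts F U1 B1 \<tau> \<sigma> = Uts F U2 B2 \<tau> \<sigma>"
  using Ut_cong[of F U1 U2 \<tau>] by (simp add: Uts_def)

lemma F_family_cong1:
  assumes a1: "\<forall>\<tau>\<in>F. U1 \<tau> = U2 \<tau>" and a2: "\<forall>\<tau>\<in>F. \<forall>\<sigma>\<in>fst (c \<tau>). B1 \<tau> \<sigma> = B2 \<tau> \<sigma>"
    and H: "F_family S L0 L1 F c U1 B1"
  shows "F_family S L0 L1 F c U2 B2"
proof -
  have e1: "Ut F U1 \<tau> = Ut F U2 \<tau>" if "\<tau> \<in> F" for \<tau> using a1 that by (rule Ut_cong)
  have e2: "Uts F U1 B1 \<tau> \<sigma> = Uts F U2 B2 \<tau> \<sigma>" if "\<tau> \<in> F" "\<sigma> \<in> fst (c \<tau>)" for \<tau> \<sigma>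
    using a1 a2 that by (intro Uts_cong) auto
  have e3: "(\<Union>\<tau>\<in>F. U1 \<tau>) = (\<Union>\<tau>\<in>F. U2 \<tau>)" using a1 by simp
  have e4: "(\<Union>\<sigma>\<in>fst (c \<tau>). Uts F U1 B1 \<tau> \<sigma>) = (\<Union>\<sigma>\<in>fst (c \<tau>). Uts F U2 B2 \<tau> \<sigma>)" if "\<tau> \<in> F" for \<tau>
    using e2 that by simp
  note H' = H[unfolded F_family_def]
  show ?thesis unfolding F_family_def
  proof (intro conjI ballI allI impI)
    fix \<tau> assume "\<tau> \<in> F" then show "U2 \<tau> \<in> L0" using H' a1 by auto
  next
    fix \<tau> j assume "\<tau> \<in> F" "\<tau> @ [j] \<in> F" then show "U2 (\<tau> @ [j]) \<subseteq> U2 \<tau>" using H' a1 by metis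
  next
    show "(\<Union>\<tau>\<in>F. U2 \<tau>) = S" using H' e3 by simp
  next
    fix \<tau> \<sigma> assume "\<tau> \<in> F" "\<sigma> \<in> fst (c \<tau>)" then show "B2 \<tau> \<sigma> \<in> L1" using H' a2 by auto
  next
    fix \<tau> \<sigma> j assume "\<tau> \<in> F" "\<sigma> \<in> fst (c \<tau>)" "\<sigma> @ [j] \<in> fst (c \<tau>)"
    then show "Uts F U2 B2 \<tau> (\<sigma> @ [j]) \<subseteq> Uts F U2 B2 \<tau> \<sigma>" using H' e2 by metis
  next
    fix \<tau> assume "\<tau> \<in> F"
    then show "(\<Union>\<sigma>\<in>fst (c \<tau>). Uts F U2 B2 \<tau> \<sigma>) = Ut F U2 \<tau>" using H' e1 e4 by metis
  qed
qed

lemma F_family_cong: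
  assumes "\<forall>\<tau>\<in>F. U1 \<tau> = U2 \<tau>" "\<forall>\<tau>\<in>F. \<forall>\<sigma>\<in>fst (c \<tau>). B1 \<tau> \<sigma> = B2 \<tau> \<sigma>"
  shows "F_family S L0 L1 F c U1 B1 = F_family S L0 L1 F c U2 B2"
  using F_family_cong1[of F U1 U2 c B1 B2] F_family_cong1[of F U2 U1 c B2 B1] assms by auto

lemma determines_cong:
  assumes "\<forall>\<tau>\<in>F. U1 \<tau> = U2 \<tau>" "\<forall>\<tau>\<in>F. \<forall>\<sigma>\<in>fst (c \<tau>). B1 \<tau> \<sigma> = B2 \<tau> \<sigma>"
  shows "determines F c U1 B1 A = determines F c U2 B2 A"
proof -
  have e2: "Uts F U1 B1 \<tau> \<sigma> = Uts F U2 B2 \<tau> \<sigma>" if "\<tau> \<in> F" "\<sigma> \<in> fst (c \<tau>)" for \<tau> \<sigma>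
    using assms that by (intro Uts_cong) auto
  show ?thesis unfolding determines_def using e2 by auto
qed

lemma right_to_left:
  assumes a: "automaton Q f i" and A: "A \<in> Lpart (CM f i) (CM0 f i) (CM1 f i) k F c"
  shows "A \<circ> inf_states f i \<in> Lpart UNIV RSig0 RSig1 k F c"
proof -
  let ?g = "inf_states f i"
  obtain U' B' where Ak: "\<forall>x\<in>CM f i. A x < k" and FF: "F_family (CM f i) (CM0 f i) (CM1 f i) F c U' B'"
    and D: "determines F c U' B' A" using A unfolding Lpart_def by blast
  define U where "U = (\<lambda>\<tau>. ?g -` U' \<tau>)"
  define B where "B = (\<lambda>\<tau> \<sigma>. ?g -` B' \<tau> \<sigma>)"
  have gCM: "?g x \<in> CM f i" for x by (simp add: CM_def)
  have UtU: "Ut F U \<tau> = ?g -` Ut F U' \<tau>" for \<tau> unfolding U_def by (rule Ut_pre)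
  have UtsU: "Uts F U B \<tau> \<sigma> = ?g -` Uts F U' B' \<tau> \<sigma>" for \<tau> \<sigma> unfolding U_def B_def by (rule Uts_pre)
  have "F_family UNIV RSig0 RSig1 F c U B"
    unfolding F_family_def
  proof (intro conjI)
    show "\<forall>\<tau>\<in>F. U \<tau> \<in> RSig0"
    proof
      fix \<tau> assume "\<tau> \<in> F"
      then have "U' \<tau> \<in> CM0 f i" using FF unfolding F_family_def by simp
      then have "{\<xi>. ?g \<xi> \<in> U' \<tau>} \<in> RSig0" by (rule pre_open[OF a])
      then show "U \<tau> \<in> RSig0" unfolding U_def vimage_def .
    qed
    show "\<forall>\<tau>\<in>F. \<forall>i. \<tau> @ [i] \<in> F \<longrightarrow> U (\<tau> @ [i]) \<subseteq> U \<tau>"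
    proof (intro ballI allI impI)
      fix \<tau> j assume "\<tau> \<in> F" "\<tau> @ [j] \<in> F"
      then have "U' (\<tau> @ [j]) \<subseteq> U' \<tau>" using FF unfolding F_family_def by simp
      then show "U (\<tau> @ [j]) \<subseteq> U \<tau>" unfolding U_def by auto
    qed
    show "(\<Union>\<tau>\<in>F. U \<tau>) = UNIV"
    proof -
      have "(\<Union>\<tau>\<in>F. U' \<tau>) = CM f i" using FF unfolding F_family_def by simp
      then have "?g x \<in> (\<Union>\<tau>\<in>F. U' \<tau>)" for x using gCM by simp
      then show ?thesis unfolding U_def by auto
    qed
    show "\<forall>\<tau>\<in>F. \<forall>\<sigma>\<in>fst (c \<tau>). B \<tau> \<sigma> \<in> RSig1"
    proof (intro ballI)
      fix \<tau> \<sigma> assume "\<tau> \<in> F" "\<sigma> \<in> fst (c \<tau>)"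
      then have "B' \<tau> \<sigma> \<in> CM1 f i" using FF unfolding F_family_def by simp
      then have "{\<xi>. ?g \<xi> \<in> B' \<tau> \<sigma>} \<in> RSig1" by (rule pre_sigma[OF a])
      then show "B \<tau> \<sigma> \<in> RSig1" unfolding B_def vimage_def .
    qed
    show "\<forall>\<tau>\<in>F. \<forall>\<sigma>\<in>fst (c \<tau>). \<forall>i. \<sigma> @ [i] \<in> fst (c \<tau>) \<longrightarrow> Uts F U B \<tau> (\<sigma> @ [i]) \<subseteq> Uts F U B \<tau> \<sigma>"
    proof (intro ballI allI impI)
      fix \<tau> \<sigma> j assume "\<tau> \<in> F" "\<sigma> \<in> fst (c \<tau>)" "\<sigma> @ [j] \<in> fst (c \<tau>)"
      then have "Uts F U' B' \<tau> (\<sigma> @ [j]) \<subseteq> Uts F U' B' \<tau> \<sigma>" using FF unfolding F_family_def by simp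
      then show "Uts F U B \<tau> (\<sigma> @ [j]) \<subseteq> Uts F U B \<tau> \<sigma>" unfolding UtsU by auto
    qed
    show "\<forall>\<tau>\<in>F. (\<Union>\<sigma>\<in>fst (c \<tau>). Uts F U B \<tau> \<sigma>) = Ut F U \<tau>"
    proof
      fix \<tau> assume "\<tau> \<in> F"
      then have "(\<Union>\<sigma>\<in>fst (c \<tau>). Uts F U' B' \<tau> \<sigma>) = Ut F U' \<tau>" using FF unfolding F_family_def by simp
      then have "?g -` (\<Union>\<sigma>\<in>fst (c \<tau>). Uts F U' B' \<tau> \<sigma>) = ?g -` Ut F U' \<tau>" by simp
      then show "(\<Union>\<sigma>\<in>fst (c \<tau>). Uts F U B \<tau> \<sigma>) = Ut F U \<tau>" unfolding UtsU UtU vimage_UN .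
    qed
  qed
  moreover have "determines F c U B (A \<circ> ?g)"
    using D unfolding determines_def UtsU by auto
  moreover have "\<forall>x\<in>UNIV. (A \<circ> ?g) x < k" using Ak gCM by simp
  ultimately show ?thesis unfolding Lpart_def by blast
qed


lemma sat_vimage: "saturates f i X \<Longrightarrow> inf_states f i -` (inf_states f i ` X) = X"
  unfolding saturates_def by blast

lemma ex_max_len: "finite X \<Longrightarrow> X \<noteq> {} \<Longrightarrow> \<exists>\<tau>\<in>X. \<forall>\<tau>'\<in>X. length \<tau>' \<le> length (\<tau> :: 'b list)"
proof -
  assume "finite X" "X \<noteq> {}"
  then have "Max (length ` X) \<in> length ` X" by simp
  then obtain \<tau> where "\<tau> \<in> X" "length \<tau> = Max (length ` X)" by auto
  moreover have "\<forall>\<tau>'\<in>X. length \<tau>' \<le> Max (length ` X)" using \<open>finite X\<close> by simp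
  ultimately show ?thesis by metis
qed

lemma leaf:
  assumes fin: "finite F" and trees: "\<forall>\<tau>\<in>F. finite (fst (c \<tau>))"
    and FF: "F_family S L0 L1 F c U B" and x: "x \<in> S"
  shows "\<exists>\<tau>\<in>F. \<exists>\<sigma>\<in>fst (c \<tau>). x \<in> Uts F U B \<tau> \<sigma> \<and> (\<forall>j. \<sigma> @ [j] \<in> fst (c \<tau>) \<longrightarrow> x \<notin> Uts F U B \<tau> (\<sigma> @ [j]))"
proof -
  have FF': "(\<Union>\<tau>\<in>F. U \<tau>) = S" "\<forall>\<tau>\<in>F. (\<Union>\<sigma>\<in>fst (c \<tau>). Uts F U B \<tau> \<sigma>) = Ut F U \<tau>"
    using FF unfolding F_family_def by simp_all
  define X1 where "X1 = {\<tau>\<in>F. x \<in> U \<tau>}"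
  have "X1 \<noteq> {}" using x FF'(1) unfolding X1_def by auto
  moreover have "finite X1" using fin unfolding X1_def by simp
  ultimately obtain \<tau> where \<tau>: "\<tau> \<in> X1" "\<forall>\<tau>'\<in>X1. length \<tau>' \<le> length \<tau>" using ex_max_len by blast
  have \<tau>F: "\<tau> \<in> F" using \<tau>(1) by (simp add: X1_def)
  have "x \<in> Ut F U \<tau>"
  proof -
    have "x \<notin> U (\<tau> @ [j])" if "\<tau> @ [j] \<in> F" for j
    proof
      assume "x \<in> U (\<tau> @ [j])"
      then have "\<tau> @ [j] \<in> X1" using that by (simp add: X1_def)
      then show False using \<tau>(2) by fastforce
    qed
    then show ?thesis using \<tau>(1) by (auto simp: Ut_def X1_def)
  qed
  then have "x \<in> (\<Union>\<sigma>\<in>fst (c \<tau>). Uts F U B \<tau> \<sigma>)" using FF'(2) \<tau>F by simp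
  define X2 where "X2 = {\<sigma>\<in>fst (c \<tau>). x \<in> Uts F U B \<tau> \<sigma>}"
  have "X2 \<noteq> {}" using \<open>x \<in> (\<Union>\<sigma>\<in>fst (c \<tau>). Uts F U B \<tau> \<sigma>)\<close> unfolding X2_def by auto
  moreover have "finite X2" using trees \<tau>F unfolding X2_def by simp
  ultimately obtain \<sigma> where \<sigma>: "\<sigma> \<in> X2" "\<forall>\<sigma>'\<in>X2. length \<sigma>' \<le> length \<sigma>" using ex_max_len by blast
  have "x \<notin> Uts F U B \<tau> (\<sigma> @ [j])" if "\<sigma> @ [j] \<in> fst (c \<tau>)" for j
  proof
    assume "x \<in> Uts F U B \<tau> (\<sigma> @ [j])"
    then have "\<sigma> @ [j] \<in> X2" using that by (simp add: X2_def)
    then show False using \<sigma>(2) by fastforce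
  qed
  then show ?thesis using \<tau>F \<sigma>(1) unfolding X2_def by blast
qed

lemma vimage_sub: "X \<subseteq> range g \<Longrightarrow> g -` X \<subseteq> g -` Y \<Longrightarrow> X \<subseteq> Y"
  by blast

lemma vimage_inj: "X \<subseteq> range g \<Longrightarrow> Y \<subseteq> range g \<Longrightarrow> g -` X = g -` Y \<Longrightarrow> X = Y"
  by (metis equalityI vimage_sub order_refl)


lemma left_to_right:
  fixes A :: "(nat \<Rightarrow> 'a) \<Rightarrow> nat"
  assumes fk: "forest_Tk k F c" and A: "A \<in> Lpart UNIV RSig0 RSig1 k F c"
  shows "\<exists>Q (f :: nat \<Rightarrow> 'a \<Rightarrow> nat) i A'. A = A' \<circ> inf_states f i \<and> automaton Q f i \<and>
           A' \<in> Lpart (CM f i) (CM0 f i) (CM1 f i) k F c"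
proof -
  obtain U B where Ak: "\<forall>x\<in>UNIV. A x < k" and FF: "F_family UNIV RSig0 RSig1 F c U B"
    and D: "determines F c U B A" using A unfolding Lpart_def by blast
  have fin: "finite F" using fk by (simp add: forest_Tk_def forest_def)
  have trees: "\<forall>\<tau>\<in>F. finite (fst (c \<tau>))" using fk by (simp add: forest_Tk_def tree_def)
  have FFs: "\<forall>\<tau>\<in>F. U \<tau> \<in> RSig0" "\<forall>\<tau>\<in>F. \<forall>\<sigma>\<in>fst (c \<tau>). B \<tau> \<sigma> \<in> RSig1"
    using FF unfolding F_family_def by simp_all
  define LL where "LL = U ` F \<union> (\<Union>\<tau>\<in>F. B \<tau> ` fst (c \<tau>))"
  have "finite LL" unfolding LL_def using fin trees by simp
  moreover have "\<forall>L\<in>LL. regular_omega L" unfolding LL_def using FFs by (auto simp: RSig0_def RSig1_def)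
  ultimately obtain Q and f :: "nat \<Rightarrow> 'a \<Rightarrow> nat" and i where a: "automaton Q f i"
    and sat: "\<forall>L\<in>LL. saturates f i L" using exists_sat by blast
  let ?g = "inf_states f i"
  have satU: "saturates f i (U \<tau>)" if "\<tau> \<in> F" for \<tau> using sat that unfolding LL_def by blast
  have satB: "saturates f i (B \<tau> \<sigma>)" if "\<tau> \<in> F" "\<sigma> \<in> fst (c \<tau>)" for \<tau> \<sigma> using sat that unfolding LL_def by blast
  define U' where "U' \<tau> = ?g ` U \<tau>" for \<tau>
  define B' where "B' \<tau> \<sigma> = ?g ` B \<tau> \<sigma>" for \<tau> \<sigma>
  have UU: "\<forall>\<tau>\<in>F. U \<tau> = ?g -` U' \<tau>" using satU sat_vimage unfolding U'_def by metis
  have BB: "\<forall>\<tau>\<in>F. \<forall>\<sigma>\<in>fst (c \<tau>). B \<tau> \<sigma> = ?g -` B' \<tau> \<sigma>" using satB sat_vimage unfolding B'_def by metis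
  have FF2: "F_family UNIV RSig0 RSig1 F c (\<lambda>\<tau>. ?g -` U' \<tau>) (\<lambda>\<tau> \<sigma>. ?g -` B' \<tau> \<sigma>)"
    using FF F_family_cong[OF UU BB] by simp
  have D2: "determines F c (\<lambda>\<tau>. ?g -` U' \<tau>) (\<lambda>\<tau> \<sigma>. ?g -` B' \<tau> \<sigma>) A"
    using D determines_cong[OF UU BB] by simp
  have UtsP: "Uts F (\<lambda>\<tau>. ?g -` U' \<tau>) (\<lambda>\<tau> \<sigma>. ?g -` B' \<tau> \<sigma>) \<tau> \<sigma> = ?g -` Uts F U' B' \<tau> \<sigma>" for \<tau> \<sigma>
    by (rule Uts_pre)
  have UtP: "Ut F (\<lambda>\<tau>. ?g -` U' \<tau>) \<tau> = ?g -` Ut F U' \<tau>" for \<tau> by (rule Ut_pre)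
  have rUt: "Ut F U' \<tau> \<subseteq> range ?g" for \<tau> by (auto simp: Ut_def U'_def)
  have rUts: "Uts F U' B' \<tau> \<sigma> \<subseteq> range ?g" for \<tau> \<sigma> using rUt by (auto simp: Uts_def)
  note FF2' = FF2[unfolded F_family_def]
  have FFn: "F_family (CM f i) (CM0 f i) (CM1 f i) F c U' B'"
    unfolding F_family_def
  proof (intro conjI)
    show "\<forall>\<tau>\<in>F. U' \<tau> \<in> CM0 f i"
    proof
      fix \<tau> assume t: "\<tau> \<in> F"
      then have "open_w (U \<tau>)" using FFs by (simp add: RSig0_def)
      then show "U' \<tau> \<in> CM0 f i" unfolding U'_def using open_sat[OF a satU[OF t]] by simp
    qed
    show "\<forall>\<tau>\<in>F. \<forall>i. \<tau> @ [i] \<in> F \<longrightarrow> U' (\<tau> @ [i]) \<subseteq> U' \<tau>"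
    proof (intro ballI allI impI)
      fix \<tau> j assume "\<tau> \<in> F" "\<tau> @ [j] \<in> F"
      then have "U (\<tau> @ [j]) \<subseteq> U \<tau>" using FF unfolding F_family_def by simp
      then show "U' (\<tau> @ [j]) \<subseteq> U' \<tau>" unfolding U'_def by (rule image_mono)
    qed
    show "(\<Union>\<tau>\<in>F. U' \<tau>) = CM f i"
    proof -
      have "(\<Union>\<tau>\<in>F. U \<tau>) = UNIV" using FF unfolding F_family_def by simp
      then have "?g ` (\<Union>\<tau>\<in>F. U \<tau>) = CM f i" by (simp add: CM_def)
      then show ?thesis unfolding U'_def image_UN .
    qed
    show "\<forall>\<tau>\<in>F. \<forall>\<sigma>\<in>fst (c \<tau>). B' \<tau> \<sigma> \<in> CM1 f i"
    proof (intro ballI)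
      fix \<tau> \<sigma> assume t: "\<tau> \<in> F" "\<sigma> \<in> fst (c \<tau>)"
      then have "sigma02_w (B \<tau> \<sigma>)" using FFs by (simp add: RSig1_def)
      then show "B' \<tau> \<sigma> \<in> CM1 f i" unfolding B'_def using sigma_sat[OF a satB[OF t]] by simp
    qed
    show "\<forall>\<tau>\<in>F. \<forall>\<sigma>\<in>fst (c \<tau>). \<forall>i. \<sigma> @ [i] \<in> fst (c \<tau>) \<longrightarrow> Uts F U' B' \<tau> (\<sigma> @ [i]) \<subseteq> Uts F U' B' \<tau> \<sigma>"
    proof (intro ballI allI impI)
      fix \<tau> \<sigma> j assume "\<tau> \<in> F" "\<sigma> \<in> fst (c \<tau>)" "\<sigma> @ [j] \<in> fst (c \<tau>)"
      then have "?g -` Uts F U' B' \<tau> (\<sigma> @ [j]) \<subseteq> ?g -` Uts F U' B' \<tau> \<sigma>"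
        using FF2' unfolding UtsP by simp
      then show "Uts F U' B' \<tau> (\<sigma> @ [j]) \<subseteq> Uts F U' B' \<tau> \<sigma>" using rUts by (rule vimage_sub[rotated])
    qed
    show "\<forall>\<tau>\<in>F. (\<Union>\<sigma>\<in>fst (c \<tau>). Uts F U' B' \<tau> \<sigma>) = Ut F U' \<tau>"
    proof
      fix \<tau> assume "\<tau> \<in> F"
      then have "(\<Union>\<sigma>\<in>fst (c \<tau>). ?g -` Uts F U' B' \<tau> \<sigma>) = ?g -` Ut F U' \<tau>"
        using FF2' unfolding UtsP UtP by simp
      then have "?g -` (\<Union>\<sigma>\<in>fst (c \<tau>). Uts F U' B' \<tau> \<sigma>) = ?g -` Ut F U' \<tau>" unfolding vimage_UN .
      moreover have "(\<Union>\<sigma>\<in>fst (c \<tau>). Uts F U' B' \<tau> \<sigma>) \<subseteq> range ?g" using rUts by blast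
      ultimately show "(\<Union>\<sigma>\<in>fst (c \<tau>). Uts F U' B' \<tau> \<sigma>) = Ut F U' \<tau>" using rUt vimage_inj by metis
    qed
  qed
  define A' where "A' y = A (SOME x. ?g x = y)" for y
  have Dn: "determines F c U' B' A'"
    unfolding determines_def
  proof (intro ballI allI impI)
    fix \<tau> \<sigma> y assume t: "\<tau> \<in> F" "\<sigma> \<in> fst (c \<tau>)"
      and y: "y \<in> Uts F U' B' \<tau> \<sigma> - (\<Union>j\<in>{j. \<sigma> @ [j] \<in> fst (c \<tau>)}. Uts F U' B' \<tau> (\<sigma> @ [j]))"
    have "y \<in> range ?g" using y rUts by blast
    then have gx: "?g (SOME x. ?g x = y) = y" by (metis (mono_tags, lifting) rangeE someI_ex)
    let ?x = "SOME x. ?g x = y"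
    have "?x \<in> Uts F (\<lambda>\<tau>. ?g -` U' \<tau>) (\<lambda>\<tau> \<sigma>. ?g -` B' \<tau> \<sigma>) \<tau> \<sigma> -
       (\<Union>j\<in>{j. \<sigma> @ [j] \<in> fst (c \<tau>)}. Uts F (\<lambda>\<tau>. ?g -` U' \<tau>) (\<lambda>\<tau> \<sigma>. ?g -` B' \<tau> \<sigma>) \<tau> (\<sigma> @ [j]))"
      unfolding UtsP using y gx by simp
    then have "A ?x = snd (c \<tau>) \<sigma>" using D2 t unfolding determines_def by blast
    then show "A' y = snd (c \<tau>) \<sigma>" by (simp add: A'_def)
  qed
  have Ak': "\<forall>y\<in>CM f i. A' y < k" using Ak by (simp add: A'_def)
  have "A' \<in> Lpart (CM f i) (CM0 f i) (CM1 f i) k F c"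
    unfolding Lpart_def using Ak' FFn Dn by blast
  moreover have "A = A' \<circ> ?g"
  proof
    fix x
    let ?x = "SOME x'. ?g x' = ?g x"
    have gx: "?g ?x = ?g x" by (rule someI[of "\<lambda>x'. ?g x' = ?g x" x]) (rule refl)
    obtain \<tau> \<sigma> where t: "\<tau> \<in> F" "\<sigma> \<in> fst (c \<tau>)"
      and l: "x \<in> Uts F (\<lambda>\<tau>. ?g -` U' \<tau>) (\<lambda>\<tau> \<sigma>. ?g -` B' \<tau> \<sigma>) \<tau> \<sigma>"
      and l2: "\<forall>j. \<sigma> @ [j] \<in> fst (c \<tau>) \<longrightarrow> x \<notin> Uts F (\<lambda>\<tau>. ?g -` U' \<tau>) (\<lambda>\<tau> \<sigma>. ?g -` B' \<tau> \<sigma>) \<tau> (\<sigma> @ [j])"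
      using leaf[OF fin trees FF2, of x] by blast
    have "A x = snd (c \<tau>) \<sigma>" using D2 t l l2 unfolding determines_def by blast
    moreover have "A ?x = snd (c \<tau>) \<sigma>"
    proof -
      have "?x \<in> Uts F (\<lambda>\<tau>. ?g -` U' \<tau>) (\<lambda>\<tau> \<sigma>. ?g -` B' \<tau> \<sigma>) \<tau> \<sigma>" using l gx unfolding UtsP by simp
      moreover have "\<forall>j. \<sigma> @ [j] \<in> fst (c \<tau>) \<longrightarrow> ?x \<notin> Uts F (\<lambda>\<tau>. ?g -` U' \<tau>) (\<lambda>\<tau> \<sigma>. ?g -` B' \<tau> \<sigma>) \<tau> (\<sigma> @ [j])"
        using l2 gx unfolding UtsP by simp
      ultimately show ?thesis using D2 t unfolding determines_def by blast
    qed
    ultimately show "A x = (A' \<circ> ?g) x" by (simp add: A'_def)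
  qed
  ultimately show ?thesis using a by blast
qed

theorem proposition4p15:
  fixes k :: nat and F :: "nat list set" and c :: "nat list \<Rightarrow> ltree"
  assumes "card (UNIV :: 'a::finite set) \<ge> 2"
    and "k \<ge> 2"
    and "forest_Tk k F c"
  shows "Lpart (UNIV :: (nat \<Rightarrow> 'a) set) RSig0 RSig1 k F c =
    {A \<circ> inf_states f i | Q (f :: nat \<Rightarrow> 'a \<Rightarrow> nat) i A.
       automaton Q f i \<and> A \<in> Lpart (CM f i) (CM0 f i) (CM1 f i) k F c}"
proof (intro set_eqI iffI)
  fix A :: "(nat \<Rightarrow> 'a) \<Rightarrow> nat"
  assume "A \<in> Lpart UNIV RSig0 RSig1 k F c"
  then obtain Q and f :: "nat \<Rightarrow> 'a \<Rightarrow> nat" and i A' where "A = A' \<circ> inf_states f i" "automaton Q f i"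
     "A' \<in> Lpart (CM f i) (CM0 f i) (CM1 f i) k F c"
    using left_to_right[OF assms(3)] by blast
  then show "A \<in> {A \<circ> inf_states f i | Q (f :: nat \<Rightarrow> 'a \<Rightarrow> nat) i A.
       automaton Q f i \<and> A \<in> Lpart (CM f i) (CM0 f i) (CM1 f i) k F c}" by blast
next
  fix A :: "(nat \<Rightarrow> 'a) \<Rightarrow> nat"
  assume "A \<in> {A \<circ> inf_states f i | Q (f :: nat \<Rightarrow> 'a \<Rightarrow> nat) i A.
       automaton Q f i \<and> A \<in> Lpart (CM f i) (CM0 f i) (CM1 f i) k F c}"
  then obtain Q and f :: "nat \<Rightarrow> 'a \<Rightarrow> nat" and i A' where "A = A' \<circ> inf_states f i" "automaton Q f i"
     "A' \<in> Lpart (CM f i) (CM0 f i) (CM1 f i) k F c" by blast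
  then show "A \<in> Lpart UNIV RSig0 RSig1 k F c" using right_to_left by blast
qed

end
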